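(* Let $H$ be a $3$-tournament on $n$ vertices and let $C=v_1b_1v_2b_2\dots v_nb_nv_1$ be a Hamiltonian cycle of $H$. Then every pair $\{v_i,v_j\}$ of vertices that are not consecutive on $C$ (i.e. $j\not\equiv i\pm 1 \pmod n$) is contained in the vertex sets of at most four of the hyperarcs $b_1,\dots,b_n$. Moreover: (a) if $n=8$, there are at most two non-consecutive pairs each contained in four hyperarcs of $C$; (b) if $n=7$, there are no two non-consecutive pairs each contained in four hyperarcs of $C$, and there are at most two non-consecutive pairs each contained in at least three hyperarcs of $C$; furthermore, if there is one non-consecutive pair contained in four hyperarcs of $C$ and another contained in three hyperarcs of $C$, then every other non-consecutive pair is contained in at most one hyperarc of $C$.
   Context: For $2\le k\le n$, a $k$-tournament $H$ on $n$ vertices is a pair $(V,A)$ where $V$ is a set of $n$ vertices and $A$ is a set of $k$-tuples of distinct vertices (hyperarcs) such that for every $k$-subset $S\subseteq V$, $A$ contains exactly one of the $k!$ orderings of $S$. For a hyperarc $a=(x_1x_2\dots x_k)$ we say $x_i$ precedes $x_j$ (written $x_i a x_j$) if $i<j$. A cycle of length $m$ in $H$ is an alternating sequence $x_1a_1x_2a_2\dots x_ma_mx_1$ of distinct vertices $x_i$ and distinct hyperarcs $a_j$ such that $x_i a_i x_{i+1}$ for all $i$ (indices mod $m$); it is Hamiltonian if it contains all vertices. A pair of vertices is contained in a hyperarc if both vertices belong to the vertex set of that hyperarc; "hyperarcs of $C$" means $b_1,\dots,b_n$. *)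

theory Defs
  imports Main
begin

definition k_tournament :: "nat \<Rightarrow> 'a set \<Rightarrow> 'a list set \<Rightarrow> bool" where
  "k_tournament k V A \<longleftrightarrow> finite V \<and> 2 \<le> k \<and> k \<le> card V \<and>
     (\<forall>a\<in>A. distinct a \<and> length a = k \<and> set a \<subseteq> V) \<and>
     (\<forall>S. S \<subseteq> V \<and> card S = k \<longrightarrow> (\<exists>!a. a \<in> A \<and> set a = S))"

definition precedes :: "'a \<Rightarrow> 'a list \<Rightarrow> 'a \<Rightarrow> bool" where
  "precedes x a y \<longleftrightarrow> (\<exists>p q. p < q \<and> q < length a \<and> a ! p = x \<and> a ! q = y)"

text \<open>Hamiltonian cycle v_0 b_0 v_1 b_1 ... v_(n-1) b_(n-1) v_0 (indices mod n, n = card V).\<close>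
definition ham_cycle :: "'a set \<Rightarrow> 'a list set \<Rightarrow> (nat \<Rightarrow> 'a) \<Rightarrow> (nat \<Rightarrow> 'a list) \<Rightarrow> bool" where
  "ham_cycle V A v b \<longleftrightarrow>
     (let n = card V in
       inj_on v {..<n} \<and> v ` {..<n} = V \<and>
       inj_on b {..<n} \<and> b ` {..<n} \<subseteq> A \<and>
       (\<forall>i<n. precedes (v i) (b i) (v (Suc i mod n))))"

definition arc_count :: "nat \<Rightarrow> (nat \<Rightarrow> 'a list) \<Rightarrow> 'a set \<Rightarrow> nat" where
  "arc_count n b P = card {t. t < n \<and> P \<subseteq> set (b t)}"

definition nonconsec_pairs :: "nat \<Rightarrow> (nat \<Rightarrow> 'a) \<Rightarrow> 'a set set" where
  "nonconsec_pairs n v = {{v i, v j} | i j. i < n \<and> j < n \<and> i \<noteq> j \<and>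
       j \<noteq> Suc i mod n \<and> i \<noteq> Suc j mod n}"

end

theory Submission
  imports Defs
begin

lemma card_le2_aux:
  assumes "\<And>a b c. a\<in>X \<Longrightarrow> b\<in>X \<Longrightarrow> c\<in>X \<Longrightarrow> a\<noteq>b \<Longrightarrow> a\<noteq>c \<Longrightarrow> b\<noteq>c \<Longrightarrow> False"
  shows "card X \<le> 2"
proof (rule ccontr)
  assume "\<not> card X \<le> 2"
  then have "Suc (Suc (Suc 0)) \<le> card X" by linarith
  then obtain a B where B: "X = insert a B" "a \<notin> B" "Suc (Suc 0) \<le> card B"
    using card_le_Suc_iff[of "Suc (Suc 0)" X] by blast
  then obtain b C where C: "B = insert b C" "b \<notin> C" "Suc 0 \<le> card C"
    using card_le_Suc_iff[of "Suc 0" B] by blast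
  then obtain c D where D: "C = insert c D" "c \<notin> D"
    using card_le_Suc_iff[of 0 C] by blast
  show False using assms[of a b c] B(1,2) C(1,2) D by blast
qed

lemma card_le1_aux:
  assumes "\<And>a b. a\<in>X \<Longrightarrow> b\<in>X \<Longrightarrow> a\<noteq>b \<Longrightarrow> False"
  shows "card X \<le> 1"
proof (rule ccontr)
  assume "\<not> card X \<le> 1"
  then have "Suc (Suc 0) \<le> card X" by linarith
  then obtain a B where B: "X = insert a B" "a \<notin> B" "Suc 0 \<le> card B"
    using card_le_Suc_iff[of "Suc 0" X] by blast
  then obtain b C where C: "B = insert b C" "b \<notin> C"
    using card_le_Suc_iff[of 0 B] by blast
  show False using assms[of a b] B(1,2) C by blast
qed

locale hc =
  fixes n :: nat and v :: "nat \<Rightarrow> 'a" and S :: "nat \<Rightarrow> 'a set" and th :: "nat \<Rightarrow> 'a"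
  assumes n3: "3 \<le> n"
    and vinj: "inj_on v {..<n}"
    and Sdef: "\<And>t. t < n \<Longrightarrow> S t = {v t, v (Suc t mod n), th t}"
    and thne: "\<And>t. t < n \<Longrightarrow> th t \<noteq> v t \<and> th t \<noteq> v (Suc t mod n)"
    and Sinj: "inj_on S {..<n}"
begin

definition own :: "'a set \<Rightarrow> nat set" where "own P = {t. t < n \<and> P \<subseteq> S t}"
definition K :: "'a \<Rightarrow> nat set" where "K x = {t. t < n \<and> (x = v t \<or> x = v (Suc t mod n))}"
definition sig :: "'a \<Rightarrow> 'a \<Rightarrow> nat" where "sig x y = card {t \<in> K x. th t = y}"
definition ncp :: "'a \<Rightarrow> 'a \<Rightarrow> bool" where
  "ncp x y \<longleftrightarrow> x \<noteq> y \<and> (\<forall>t<n. {x,y} \<noteq> {v t, v (Suc t mod n)})"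

lemma suc_lt: "t < n \<Longrightarrow> Suc t mod n < n" using n3 by simp

lemma suc_eq: "u < n \<Longrightarrow> Suc u mod n = (if Suc u = n then 0 else Suc u)"
  by (cases "Suc u = n") auto

lemma suc_inj: "t < n \<Longrightarrow> t' < n \<Longrightarrow> Suc t mod n = Suc t' mod n \<Longrightarrow> t = t'"
  using suc_eq[of t] suc_eq[of t'] by (auto split: if_splits)

lemma finite_own: "finite (own P)" unfolding own_def by auto
lemma own_sub: "own P \<subseteq> {..<n}" unfolding own_def by auto
lemma finite_K: "finite (K x)" unfolding K_def by auto

lemma card_K: "card (K x) \<le> 2"
proof -
  have e: "K x = {t. t < n \<and> x = v t} \<union> {t. t < n \<and> x = v (Suc t mod n)}"
    unfolding K_def by auto
  have 1: "card {t. t < n \<and> x = v t} \<le> 1"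
    using card_le_Suc0_iff_eq[of "{t. t < n \<and> x = v t}"] vinj
    by (auto dest: inj_onD)
  have 2: "card {t. t < n \<and> x = v (Suc t mod n)} \<le> 1"
  proof -
    have "\<forall>a1\<in>{t. t < n \<and> x = v (Suc t mod n)}. \<forall>a2\<in>{t. t < n \<and> x = v (Suc t mod n)}. a1 = a2"
    proof (intro ballI)
      fix a1 a2 assume "a1 \<in> {t. t < n \<and> x = v (Suc t mod n)}" "a2 \<in> {t. t < n \<and> x = v (Suc t mod n)}"
      then have "a1 < n" "a2 < n" "v (Suc a1 mod n) = v (Suc a2 mod n)" by auto
      then have "Suc a1 mod n = Suc a2 mod n" using vinj suc_lt by (auto dest: inj_onD)
      then show "a1 = a2" using suc_inj \<open>a1 < n\<close> \<open>a2 < n\<close> by blast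
    qed
    then show ?thesis using card_le_Suc0_iff_eq[of "{t. t < n \<and> x = v (Suc t mod n)}"] by auto
  qed
  show ?thesis using e 1 2 card_Un_le[of "{t. t < n \<and> x = v t}" "{t. t < n \<and> x = v (Suc t mod n)}"]
    by simp
qed

lemma sig_le: "sig x y \<le> 2"
proof -
  have "sig x y \<le> card (K x)" unfolding sig_def by (rule card_mono[OF finite_K]) auto
  then show ?thesis using card_K[of x] by simp
qed

lemma sig2: assumes "y \<noteq> z" shows "sig x y + sig x z \<le> 2"
proof -
  have "sig x y + sig x z = card ({t \<in> K x. th t = y} \<union> {t \<in> K x. th t = z})"
    unfolding sig_def using assms finite_K by (subst card_Un_disjoint) auto
  also have "\<dots> \<le> card (K x)" by (rule card_mono[OF finite_K]) auto
  finally show ?thesis using card_K[of x] by simp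
qed

lemma sig3: assumes "y \<noteq> z" "y \<noteq> u" "z \<noteq> u" shows "sig x y + sig x z + sig x u \<le> 2"
proof -
  have "sig x y + sig x z + sig x u = card ({t \<in> K x. th t = y} \<union> {t \<in> K x. th t = z} \<union> {t \<in> K x. th t = u})"
    unfolding sig_def using assms finite_K by (subst card_Un_disjoint, auto)+
  also have "\<dots> \<le> card (K x)" by (rule card_mono[OF finite_K]) auto
  finally show ?thesis using card_K[of x] by simp
qed

lemma ncp_sym: "ncp x y = ncp y x" unfolding ncp_def by (auto simp: insert_commute)

lemma own_split: assumes "ncp x y"
  shows "own {x,y} = {t \<in> K x. th t = y} \<union> {t \<in> K y. th t = x}"
proof (rule set_eqI, rule iffI)
  fix t assume "t \<in> own {x,y}"
  then have t: "t < n" "x \<in> {v t, v (Suc t mod n), th t}" "y \<in> {v t, v (Suc t mod n), th t}"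
    unfolding own_def using Sdef by auto
  have "th t = x \<or> th t = y"
  proof (rule ccontr)
    assume "\<not> (th t = x \<or> th t = y)"
    then have "x \<in> {v t, v (Suc t mod n)}" "y \<in> {v t, v (Suc t mod n)}" using t by auto
    then have "{x,y} = {v t, v (Suc t mod n)}" using assms unfolding ncp_def by auto
    then show False using assms t unfolding ncp_def by auto
  qed
  then show "t \<in> {t \<in> K x. th t = y} \<union> {t \<in> K y. th t = x}"
    using t assms unfolding K_def ncp_def by auto
next
  fix t assume "t \<in> {t \<in> K x. th t = y} \<union> {t \<in> K y. th t = x}"
  then show "t \<in> own {x,y}" unfolding K_def own_def using Sdef by auto
qed

lemma cnt_split: assumes "ncp x y" shows "card (own {x,y}) = sig x y + sig y x"
  unfolding own_split[OF assms] sig_def using assms finite_K unfolding ncp_def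
  by (subst card_Un_disjoint) auto

lemma own_th: "ncp x y \<Longrightarrow> t \<in> own {x,y} \<Longrightarrow> th t \<in> {x,y}"
  using own_split by auto

lemma cardS: "t < n \<Longrightarrow> card (S t) \<le> 3"
  using Sdef[of t] by (auto simp: card_insert_if)

lemma finS: "t < n \<Longrightarrow> finite (S t)" using Sdef by auto

lemma own_disj: assumes "x \<noteq> y" "a \<noteq> b" "{x,y} \<inter> {a,b} = {}"
  shows "own {x,y} \<inter> own {a,b} = {}"
proof (rule ccontr)
  assume "own {x,y} \<inter> own {a,b} \<noteq> {}"
  then obtain t where t: "t < n" "{x,y} \<subseteq> S t" "{a,b} \<subseteq> S t" unfolding own_def by auto
  then have "{x,y,a,b} \<subseteq> S t" by auto
  then have "card {x,y,a,b} \<le> card (S t)" using finS[OF t(1)] by (rule card_mono[rotated])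
  moreover have "card {x,y,a,b} = 4" using assms by auto
  ultimately show False using cardS[OF t(1)] by simp
qed

lemma own_int: assumes "x \<noteq> y" "a \<noteq> b" "{x,y} \<noteq> {a,b}"
  shows "card (own {x,y} \<inter> own {a,b}) \<le> 1"
proof -
  have c3: "3 \<le> card {x,y,a,b}" using assms by (auto simp: card_insert_if doubleton_eq_iff)
  have key: "S t = {x,y,a,b}" if "t \<in> own {x,y} \<inter> own {a,b}" for t
  proof -
    from that have t: "t < n" "{x,y,a,b} \<subseteq> S t" unfolding own_def by auto
    show ?thesis using card_seteq[OF finS[OF t(1)] t(2)] c3 cardS[OF t(1)] by simp
  qed
  have "\<forall>t1\<in>own {x,y} \<inter> own {a,b}. \<forall>t2\<in>own {x,y} \<inter> own {a,b}. t1 = t2"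
  proof (intro ballI)
    fix t1 t2 assume a: "t1 \<in> own {x,y} \<inter> own {a,b}" "t2 \<in> own {x,y} \<inter> own {a,b}"
    then have "S t1 = S t2" using key by simp
    moreover have "t1 < n" "t2 < n" using a unfolding own_def by auto
    ultimately show "t1 = t2" using Sinj by (auto dest: inj_onD)
  qed
  then show ?thesis using card_le_Suc0_iff_eq[of "own {x,y} \<inter> own {a,b}"] finite_own by auto
qed


lemma heavy_ge1: assumes "ncp x y" "3 \<le> card (own {x,y})" shows "1 \<le> sig x y" "1 \<le> sig y x"
  using cnt_split[OF assms(1)] assms(2) sig_le[of x y] sig_le[of y x] by linarith+

lemma share: assumes "ncp u a" "ncp u b" "a \<noteq> b" "3 \<le> card (own {u,a})" "3 \<le> card (own {u,b})"
  shows "sig a u = 2" "sig u a = 1"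
  using cnt_split[OF assms(1)] cnt_split[OF assms(2)] assms(4,5) sig2[OF assms(3), of u]
    sig_le[of a u] sig_le[of b u] heavy_ge1[OF assms(1,4)] heavy_ge1[OF assms(2,5)] by linarith+

lemma three_at: assumes "ncp u a" "ncp u b" "ncp u d" "a \<noteq> b" "a \<noteq> d" "b \<noteq> d"
  "3 \<le> card (own {u,a})" "3 \<le> card (own {u,b})" "3 \<le> card (own {u,d})"
  shows False
  using sig3[OF assms(4,5,6), of u] heavy_ge1[OF assms(1,7)] heavy_ge1[OF assms(2,8)] heavy_ge1[OF assms(3,9)]
  by linarith

lemma rep: assumes "ncp x y" "u \<in> {x,y}" shows "\<exists>a. {x,y} = {u,a} \<and> ncp u a"
  using assms by (auto simp: ncp_sym insert_commute)

lemma Lnot: assumes "ncp u a" "ncp u b" "a \<noteq> b" "ncp c d" "{c,d} \<noteq> {u,a}" "{c,d} \<noteq> {u,b}"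
  "3 \<le> card (own {u,a})" "3 \<le> card (own {u,b})" "3 \<le> card (own {c,d})"
  shows "c \<noteq> u" "c \<noteq> a" "c \<noteq> b"
proof -
  show "c \<noteq> u"
  proof
    assume "c = u"
    then show False using three_at[OF assms(1,2), of d] assms by auto
  qed
  show "c \<noteq> a"
  proof
    assume ca: "c = a"
    have du: "d \<noteq> u" using assms(5) ca by auto
    have 1: "sig a u = 2" using share[OF assms(1,2,3,7,8)] by simp
    have "ncp a u" using assms(1) ncp_sym by auto
    moreover have "ncp a d" using assms(4) ca by simp
    moreover have "3 \<le> card (own {a,u})" using assms(7) by (simp add: insert_commute)
    moreover have "3 \<le> card (own {a,d})" using assms(9) ca by simp
    ultimately have "sig a u = 1" using share[of a u d] du by simp
    then show False using 1 by simp
  qed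
  show "c \<noteq> b"
  proof
    assume ca: "c = b"
    have du: "d \<noteq> u" using assms(6) ca by auto
    have 1: "sig b u = 2" using share[OF assms(2,1) assms(3)[symmetric] assms(8,7)] by simp
    have "ncp b u" using assms(2) ncp_sym by auto
    moreover have "ncp b d" using assms(4) ca by simp
    moreover have "3 \<le> card (own {b,u})" using assms(8) by (simp add: insert_commute)
    moreover have "3 \<le> card (own {b,d})" using assms(9) ca by simp
    ultimately have "sig b u = 1" using share[of b u d] du by simp
    then show False using 1 by simp
  qed
qed

lemma no3_shared: assumes "ncp x1 y1" "ncp x2 y2" "ncp x3 y3"
  "{x1,y1} \<noteq> {x2,y2}" "{x1,y1} \<noteq> {x3,y3}" "{x2,y2} \<noteq> {x3,y3}"
  "3 \<le> card (own {x1,y1})" "3 \<le> card (own {x2,y2})" "3 \<le> card (own {x3,y3})"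
  "{x1,y1} \<inter> {x2,y2} \<noteq> {}"
  shows "8 \<le> n"
proof -
  obtain u where u: "u \<in> {x1,y1}" "u \<in> {x2,y2}" using assms(10) by blast
  obtain a where a: "{x1,y1} = {u,a}" "ncp u a" using rep[OF assms(1) u(1)] by blast
  obtain b where b: "{x2,y2} = {u,b}" "ncp u b" using rep[OF assms(2) u(2)] by blast
  have ab: "a \<noteq> b" using a b assms(4) by auto
  have h1: "3 \<le> card (own {u,a})" using assms(7) a by simp
  have h2: "3 \<le> card (own {u,b})" using assms(8) b by simp
  have n1: "{x3,y3} \<noteq> {u,a}" "{x3,y3} \<noteq> {u,b}" using a b assms(5,6) by auto
  have n2: "{y3,x3} \<noteq> {u,a}" "{y3,x3} \<noteq> {u,b}" using n1 by (auto simp: insert_commute)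
  have c1: "x3 \<noteq> u" "x3 \<noteq> a" "x3 \<noteq> b" using Lnot[OF a(2) b(2) ab assms(3) n1 h1 h2 assms(9)] by auto
  have c2: "y3 \<noteq> u" "y3 \<noteq> a" "y3 \<noteq> b"
    using Lnot[OF a(2) b(2) ab _ n2 h1 h2, of ] assms(3,9) ncp_sym by (auto simp: insert_commute)
  have ua: "u \<noteq> a" "u \<noteq> b" "x3 \<noteq> y3" using a(2) b(2) assms(3) unfolding ncp_def by auto
  have d1: "own {u,a} \<inter> own {x3,y3} = {}" by (rule own_disj) (use ua c1 c2 in auto)
  have d2: "own {u,b} \<inter> own {x3,y3} = {}" by (rule own_disj) (use ua c1 c2 in auto)
  have i12: "card (own {u,a} \<inter> own {u,b}) \<le> 1" by (rule own_int) (use ua ab in \<open>auto simp: doubleton_eq_iff\<close>)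
  have "card (own {u,a}) + card (own {u,b}) = card (own {u,a} \<union> own {u,b}) + card (own {u,a} \<inter> own {u,b})"
    by (rule card_Un_Int) (rule finite_own)+
  then have "5 \<le> card (own {u,a} \<union> own {u,b})" using h1 h2 i12 by linarith
  moreover have "card ((own {u,a} \<union> own {u,b}) \<union> own {x3,y3}) = card (own {u,a} \<union> own {u,b}) + card (own {x3,y3})"
    by (rule card_Un_disjoint) (use finite_own d1 d2 in auto)
  moreover have "card ((own {u,a} \<union> own {u,b}) \<union> own {x3,y3}) \<le> n"
    using card_mono[of "{..<n}"] own_sub by (metis card_lessThan finite_lessThan le_sup_iff)
  ultimately show ?thesis using assms(9) by linarith
qed

lemma no3: assumes "ncp x1 y1" "ncp x2 y2" "ncp x3 y3"
  "{x1,y1} \<noteq> {x2,y2}" "{x1,y1} \<noteq> {x3,y3}" "{x2,y2} \<noteq> {x3,y3}"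
  "3 \<le> card (own {x1,y1})" "3 \<le> card (own {x2,y2})" "3 \<le> card (own {x3,y3})"
  shows "8 \<le> n"
proof (cases "{x1,y1} \<inter> {x2,y2} \<noteq> {}")
  case True then show ?thesis using no3_shared[OF assms] by simp
next
  case F1: False
  show ?thesis
  proof (cases "{x1,y1} \<inter> {x3,y3} \<noteq> {}")
    case True then show ?thesis using no3_shared[OF assms(1,3,2,5,4) assms(6)[symmetric] assms(7,9,8)] by simp
  next
    case F2: False
    show ?thesis
    proof (cases "{x2,y2} \<inter> {x3,y3} \<noteq> {}")
      case True then show ?thesis using no3_shared[OF assms(2,3,1) assms(6) assms(4)[symmetric] assms(5)[symmetric] assms(8,9,7)] by simp
    next
      case F3: False
      have ne: "x1 \<noteq> y1" "x2 \<noteq> y2" "x3 \<noteq> y3" using assms(1-3) unfolding ncp_def by auto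
      have d12: "own {x1,y1} \<inter> own {x2,y2} = {}" using own_disj ne F1 by auto
      have d13: "own {x1,y1} \<inter> own {x3,y3} = {}" using own_disj ne F2 by auto
      have d23: "own {x2,y2} \<inter> own {x3,y3} = {}" using own_disj ne F3 by auto
      have "card (own {x1,y1} \<union> own {x2,y2} \<union> own {x3,y3}) = card (own {x1,y1}) + card (own {x2,y2}) + card (own {x3,y3})"
        using d12 d13 d23 finite_own by (subst card_Un_disjoint, auto)+
      moreover have "card (own {x1,y1} \<union> own {x2,y2} \<union> own {x3,y3}) \<le> n"
        using card_mono[of "{..<n}"] own_sub by (metis card_lessThan finite_lessThan le_sup_iff)
      ultimately show ?thesis using assms(7-9) by linarith
    qed
  qed
qed

lemma four_sig: assumes "ncp x y" "card (own {x,y}) = 4" shows "sig x y = 2" "sig y x = 2"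
  using cnt_split[OF assms(1)] assms(2) sig_le[of x y] sig_le[of y x] by linarith+

lemma four_excl: assumes "ncp x y" "card (own {x,y}) = 4" "z \<noteq> y" shows "sig x z = 0"
  using four_sig[OF assms(1,2)] sig2[OF assms(3)[symmetric], of x] by linarith

lemma four_disj: assumes "ncp x y" "ncp a b" "card (own {x,y}) = 4" "card (own {a,b}) = 4" "{x,y} \<noteq> {a,b}"
  shows "{x,y} \<inter> {a,b} = {}"
proof (rule ccontr)
  assume "{x,y} \<inter> {a,b} \<noteq> {}"
  then obtain u where u: "u \<in> {x,y}" "u \<in> {a,b}" by blast
  obtain p where p: "{x,y} = {u,p}" "ncp u p" using rep[OF assms(1) u(1)] by blast
  obtain q where q: "{a,b} = {u,q}" "ncp u q" using rep[OF assms(2) u(2)] by blast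
  have "p \<noteq> q" using p q assms(5) by auto
  then have "sig u q = 0" using four_excl[OF p(2)] assms(3) p(1) by simp
  moreover have "sig u q = 2" using four_sig[OF q(2)] assms(4) q(1) by simp
  ultimately show False by simp
qed

lemma four2: assumes "ncp x y" "ncp a b" "card (own {x,y}) = 4" "card (own {a,b}) = 4" "{x,y} \<noteq> {a,b}"
  shows "8 \<le> n"
proof -
  have ne: "x \<noteq> y" "a \<noteq> b" using assms(1,2) unfolding ncp_def by auto
  have d: "own {x,y} \<inter> own {a,b} = {}" using own_disj[OF ne four_disj[OF assms]] .
  have "card (own {x,y} \<union> own {a,b}) = 8" using d finite_own assms(3,4) by (subst card_Un_disjoint) auto
  moreover have "card (own {x,y} \<union> own {a,b}) \<le> n"
    using card_mono[of "{..<n}"] own_sub by (metis card_lessThan finite_lessThan le_sup_iff)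
  ultimately show ?thesis by linarith
qed

lemma four3: assumes "ncp x1 y1" "ncp x2 y2" "ncp x3 y3"
  "{x1,y1} \<noteq> {x2,y2}" "{x1,y1} \<noteq> {x3,y3}" "{x2,y2} \<noteq> {x3,y3}"
  "card (own {x1,y1}) = 4" "card (own {x2,y2}) = 4" "card (own {x3,y3}) = 4"
  shows "12 \<le> n"
proof -
  have ne: "x1 \<noteq> y1" "x2 \<noteq> y2" "x3 \<noteq> y3" using assms(1-3) unfolding ncp_def by auto
  have d12: "own {x1,y1} \<inter> own {x2,y2} = {}" using own_disj[OF ne(1,2) four_disj[OF assms(1,2,7,8,4)]] .
  have d13: "own {x1,y1} \<inter> own {x3,y3} = {}" using own_disj[OF ne(1,3) four_disj[OF assms(1,3,7,9,5)]] .
  have d23: "own {x2,y2} \<inter> own {x3,y3} = {}" using own_disj[OF ne(2,3) four_disj[OF assms(2,3,8,9,6)]] .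
  have "card (own {x1,y1} \<union> own {x2,y2} \<union> own {x3,y3}) = card (own {x1,y1}) + card (own {x2,y2}) + card (own {x3,y3})"
    using d12 d13 d23 finite_own by (subst card_Un_disjoint, auto)+
  moreover have "card (own {x1,y1} \<union> own {x2,y2} \<union> own {x3,y3}) \<le> n"
    using card_mono[of "{..<n}"] own_sub by (metis card_lessThan finite_lessThan le_sup_iff)
  ultimately show ?thesis using assms(7-9) by linarith
qed


lemma iii_aux: assumes "ncp x y" "card (own {x,y}) = 4" "ncp a b" "card (own {a,b}) = 3"
  "ncp c d" "{c,d} \<noteq> {x,y}" "2 \<le> card (own {c,d})" "n = 7"
  "{a,b} \<inter> {x,y} = {}" "own {x,y} \<union> own {a,b} = {..<n}" "c \<in> {x,y}"
  shows False
proof -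
  obtain p where p: "{x,y} = {c,p}" "ncp c p" using rep[OF assms(1,11)] by blast
  have dp: "d \<noteq> p" using p assms(6) by auto
  have c4: "card (own {c,p}) = 4" using assms(2) p(1) by simp
  have "sig c d = 0" using four_excl[OF p(2) c4 dp] .
  then have "sig d c = 2" using cnt_split[OF assms(5)] assms(7) sig_le[of d c] by linarith
  define T where "T = {t \<in> K d. th t = c}"
  have cT: "card T = 2" using \<open>sig d c = 2\<close> unfolding sig_def T_def .
  have T1: "T \<subseteq> own {c,d}" using own_split[OF assms(5)] unfolding T_def by auto
  have T2: "T \<subseteq> own {x,y}"
  proof
    fix t assume t: "t \<in> T"
    then have "t \<in> {..<n}" unfolding T_def K_def by auto
    moreover have "t \<notin> own {a,b}"
    proof
      assume "t \<in> own {a,b}"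
      then have "th t \<in> {a,b}" using own_th[OF assms(3)] by blast
      moreover have "th t = c" using t unfolding T_def by simp
      ultimately show False using assms(9,11) by auto
    qed
    ultimately show "t \<in> own {x,y}" using assms(10) by auto
  qed
  have ne: "x \<noteq> y" "c \<noteq> d" using assms(1,5) unfolding ncp_def by auto
  have "card (own {x,y} \<inter> own {c,d}) \<le> 1" by (rule own_int) (use ne assms(6) in auto)
  moreover have "card T \<le> card (own {x,y} \<inter> own {c,d})"
    by (rule card_mono) (use T1 T2 finite_own in auto)
  ultimately show False using cT by simp
qed

lemma iii: assumes "ncp x y" "card (own {x,y}) = 4" "ncp a b" "card (own {a,b}) = 3"
  "ncp c d" "{c,d} \<noteq> {x,y}" "{c,d} \<noteq> {a,b}" "2 \<le> card (own {c,d})" "n = 7"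
  shows False
proof -
  have ne: "x \<noteq> y" "a \<noteq> b" "c \<noteq> d" using assms(1,3,5) unfolding ncp_def by auto
  have disj: "{a,b} \<inter> {x,y} = {}"
  proof (rule ccontr)
    assume "{a,b} \<inter> {x,y} \<noteq> {}"
    then obtain u where u: "u \<in> {x,y}" "u \<in> {a,b}" by blast
    obtain p where p: "{x,y} = {u,p}" "ncp u p" using rep[OF assms(1) u(1)] by blast
    obtain q where q: "{a,b} = {u,q}" "ncp u q" using rep[OF assms(3) u(2)] by blast
    have "{x,y} \<noteq> {a,b}" using assms(2,4) by auto
    then have "p \<noteq> q" using p q by auto
    then have "sig u q = 0" using four_excl[OF p(2)] assms(2) p(1) by simp
    moreover have "1 \<le> sig u q" using heavy_ge1[OF q(2)] assms(4) q(1) by simp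
    ultimately show False by simp
  qed
  have d1: "own {x,y} \<inter> own {a,b} = {}" by (rule own_disj) (use ne disj in auto)
  have "card (own {x,y} \<union> own {a,b}) = 7" using d1 finite_own assms(2,4) by (subst card_Un_disjoint) auto
  then have U: "own {x,y} \<union> own {a,b} = {..<n}"
    using card_seteq[of "{..<n}" "own {x,y} \<union> own {a,b}"] own_sub assms(9) by auto
  show False
  proof (cases "c \<in> {x,y}")
    case True
    show False by (rule iii_aux[OF assms(1-5) assms(6) assms(8,9) disj U True])
  next
    case F1: False
    show False
    proof (cases "d \<in> {x,y}")
      case True
      have "ncp d c" using assms(5) ncp_sym by auto
      moreover have "{d,c} \<noteq> {x,y}" using assms(6) by (auto simp: insert_commute)
      moreover have "2 \<le> card (own {d,c})" using assms(8) by (simp add: insert_commute)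
      ultimately show False using iii_aux[OF assms(1-4)] assms(9) disj U True by blast
    next
      case F2: False
      have "own {c,d} \<inter> own {x,y} = {}" by (rule own_disj) (use ne F1 F2 in auto)
      then have "own {c,d} \<subseteq> own {a,b}" using U own_sub by auto
      then have "own {a,b} \<inter> own {c,d} = own {c,d}" by auto
      moreover have "card (own {a,b} \<inter> own {c,d}) \<le> 1" by (rule own_int) (use ne assms(7) in auto)
      ultimately show False using assms(8) by simp
    qed
  qed
qed

end

theorem lemma2:
  fixes V :: "'a set" and A :: "'a list set" and v :: "nat \<Rightarrow> 'a" and b :: "nat \<Rightarrow> 'a list"
  assumes "k_tournament 3 V A" and "ham_cycle V A v b"
  defines "n \<equiv> card V"
  defines "NC \<equiv> nonconsec_pairs n v"
  shows "(\<forall>P\<in>NC. arc_count n b P \<le> 4)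
    \<and> (n = 8 \<longrightarrow> card {P\<in>NC. arc_count n b P = 4} \<le> 2)
    \<and> (n = 7 \<longrightarrow>
         card {P\<in>NC. arc_count n b P = 4} \<le> 1
       \<and> card {P\<in>NC. arc_count n b P \<ge> 3} \<le> 2
       \<and> (\<forall>P\<in>NC. \<forall>Q\<in>NC. arc_count n b P = 4 \<and> arc_count n b Q = 3 \<longrightarrow>
            (\<forall>R\<in>NC - {P, Q}. arc_count n b R \<le> 1)))"
proof -
  from assms(1) have n3: "3 \<le> n"
    and arcs: "\<forall>a\<in>A. distinct a \<and> length a = 3 \<and> set a \<subseteq> V"
    and uniq: "\<forall>S. S \<subseteq> V \<and> card S = 3 \<longrightarrow> (\<exists>!a. a \<in> A \<and> set a = S)"
    unfolding k_tournament_def n_def by auto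
  from assms(2) have vinj: "inj_on v {..<n}" and binj: "inj_on b {..<n}" and bA: "b ` {..<n} \<subseteq> A"
    and prec: "\<forall>i<n. precedes (v i) (b i) (v (Suc i mod n))"
    unfolding ham_cycle_def Let_def n_def by auto
  have suclt: "Suc t mod n < n" for t using n3 by simp
  have mem: "v t \<in> set (b t) \<and> v (Suc t mod n) \<in> set (b t)" if "t < n" for t
  proof -
    from prec that obtain p q where "p < q" "q < length (b t)" "b t ! p = v t" "b t ! q = v (Suc t mod n)"
      unfolding precedes_def by blast
    then show ?thesis by (metis nth_mem order.strict_trans)
  qed
  have card3: "card (set (b t)) = 3" if "t < n" for t
    using arcs bA that by (auto simp: distinct_card)
  have vne: "v t \<noteq> v (Suc t mod n)" if "t < n" for t
  proof
    assume "v t = v (Suc t mod n)"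
    then have "t = Suc t mod n" using vinj that suclt by (auto dest: inj_onD)
    moreover have "Suc t mod n \<noteq> t"
    proof (cases "Suc t = n")
      case True then show ?thesis using n3 by auto
    next
      case False then have "Suc t < n" using that by simp
      then show ?thesis by simp
    qed
    ultimately show False by simp
  qed
  have ex: "\<exists>z. z \<in> set (b t) \<and> z \<noteq> v t \<and> z \<noteq> v (Suc t mod n)" if "t < n" for t
  proof (rule ccontr)
    assume "\<not> ?thesis"
    then have "set (b t) \<subseteq> {v t, v (Suc t mod n)}" by auto
    then have "card (set (b t)) \<le> card {v t, v (Suc t mod n)}" by (rule card_mono[rotated]) simp
    also have "\<dots> \<le> 2" by (simp add: card_insert_if)
    finally show False using card3[OF that] by simp
  qed
  define th where "th t = (SOME z. z \<in> set (b t) \<and> z \<noteq> v t \<and> z \<noteq> v (Suc t mod n))" for t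
  have thp: "th t \<in> set (b t) \<and> th t \<noteq> v t \<and> th t \<noteq> v (Suc t mod n)" if "t < n" for t
    unfolding th_def by (rule someI_ex[OF ex[OF that]])
  have Sdef: "set (b t) = {v t, v (Suc t mod n), th t}" if "t < n" for t
  proof -
    have sub: "{v t, v (Suc t mod n), th t} \<subseteq> set (b t)" using mem[OF that] thp[OF that] by auto
    have "card {v t, v (Suc t mod n), th t} = 3" using vne[OF that] thp[OF that] by auto
    then show ?thesis using card_seteq[OF finite_set sub] card3[OF that] by simp
  qed
  have Sinj: "inj_on (\<lambda>t. set (b t)) {..<n}"
  proof (rule inj_onI)
    fix t t' assume t: "t \<in> {..<n}" "t' \<in> {..<n}" "set (b t) = set (b t')"
    have bt: "b t \<in> A" "b t' \<in> A" using bA t by auto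
    have "set (b t) \<subseteq> V" "card (set (b t)) = 3" using arcs bt card3 t by auto
    then have "\<exists>!a. a \<in> A \<and> set a = set (b t)" using uniq by blast
    then have "b t = b t'" using bt t(3) by blast
    then show "t = t'" using binj t by (auto dest: inj_onD)
  qed
  interpret hc n v "\<lambda>t. set (b t)" th
    using n3 vinj Sdef thp Sinj by unfold_locales auto
  have ac: "arc_count n b P = card (own P)" for P unfolding arc_count_def own_def by simp
  have rep: "\<exists>x y. P = {x,y} \<and> ncp x y" if "P \<in> NC" for P
  proof -
    from that obtain i j where ij: "P = {v i, v j}" "i < n" "j < n" "i \<noteq> j" "j \<noteq> Suc i mod n" "i \<noteq> Suc j mod n"
      unfolding NC_def nonconsec_pairs_def by blast
    have "ncp (v i) (v j)"
      unfolding ncp_def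
    proof (intro conjI allI impI)
      show "v i \<noteq> v j" using ij vinj by (auto dest: inj_onD)
      fix t assume t: "t < n"
      show "{v i, v j} \<noteq> {v t, v (Suc t mod n)}"
      proof
        assume "{v i, v j} = {v t, v (Suc t mod n)}"
        then have "(v i = v t \<and> v j = v (Suc t mod n)) \<or> (v i = v (Suc t mod n) \<and> v j = v t)"
          by (auto simp: doubleton_eq_iff)
        moreover have eqi: "\<And>a c. a < n \<Longrightarrow> c < n \<Longrightarrow> v a = v c \<Longrightarrow> a = c"
          using vinj unfolding inj_on_def by blast
        ultimately have "(i = t \<and> j = Suc t mod n) \<or> (i = Suc t mod n \<and> j = t)"
          using ij(2,3) t suclt[of t] by blast
        then show False using ij by auto
      qed
    qed
    then show ?thesis using ij by blast
  qed
  have p1: "\<forall>P\<in>NC. arc_count n b P \<le> 4"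
  proof
    fix P assume "P \<in> NC"
    then obtain x y where "P = {x,y}" "ncp x y" using rep by blast
    then show "arc_count n b P \<le> 4" using ac cnt_split sig_le[of x y] sig_le[of y x] by simp
  qed
  have p2: "card {P\<in>NC. arc_count n b P = 4} \<le> 2" if n8: "n = 8"
  proof (rule card_le2_aux)
    fix P Q R assume a: "P \<in> {P\<in>NC. arc_count n b P = 4}" "Q \<in> {P\<in>NC. arc_count n b P = 4}"
      "R \<in> {P\<in>NC. arc_count n b P = 4}" "P \<noteq> Q" "P \<noteq> R" "Q \<noteq> R"
    obtain x1 y1 where 1: "P = {x1,y1}" "ncp x1 y1" using rep a(1) by blast
    obtain x2 y2 where 2: "Q = {x2,y2}" "ncp x2 y2" using rep a(2) by blast
    obtain x3 y3 where 3: "R = {x3,y3}" "ncp x3 y3" using rep a(3) by blast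
    have "12 \<le> n" by (rule four3[OF 1(2) 2(2) 3(2)]) (use a 1 2 3 ac in auto)
    then show False using n8 by simp
  qed
  have p3: "card {P\<in>NC. arc_count n b P = 4} \<le> 1" if n7: "n = 7"
  proof (rule card_le1_aux)
    fix P Q assume a: "P \<in> {P\<in>NC. arc_count n b P = 4}" "Q \<in> {P\<in>NC. arc_count n b P = 4}" "P \<noteq> Q"
    obtain x1 y1 where 1: "P = {x1,y1}" "ncp x1 y1" using rep a(1) by blast
    obtain x2 y2 where 2: "Q = {x2,y2}" "ncp x2 y2" using rep a(2) by blast
    have "8 \<le> n" by (rule four2[OF 1(2) 2(2)]) (use a 1 2 ac in auto)
    then show False using n7 by simp
  qed
  have p4: "card {P\<in>NC. arc_count n b P \<ge> 3} \<le> 2" if n7: "n = 7"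
  proof (rule card_le2_aux)
    fix P Q R assume a: "P \<in> {P\<in>NC. arc_count n b P \<ge> 3}" "Q \<in> {P\<in>NC. arc_count n b P \<ge> 3}"
      "R \<in> {P\<in>NC. arc_count n b P \<ge> 3}" "P \<noteq> Q" "P \<noteq> R" "Q \<noteq> R"
    obtain x1 y1 where 1: "P = {x1,y1}" "ncp x1 y1" using rep a(1) by blast
    obtain x2 y2 where 2: "Q = {x2,y2}" "ncp x2 y2" using rep a(2) by blast
    obtain x3 y3 where 3: "R = {x3,y3}" "ncp x3 y3" using rep a(3) by blast
    have "8 \<le> n" by (rule no3[OF 1(2) 2(2) 3(2)]) (use a 1 2 3 ac in auto)
    then show False using n7 by simp
  qed
  have p5: "\<forall>P\<in>NC. \<forall>Q\<in>NC. arc_count n b P = 4 \<and> arc_count n b Q = 3 \<longrightarrow>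
            (\<forall>R\<in>NC - {P, Q}. arc_count n b R \<le> 1)" if n7: "n = 7"
  proof (intro ballI impI)
    fix P Q R assume P: "P \<in> NC" and Q: "Q \<in> NC" and c: "arc_count n b P = 4 \<and> arc_count n b Q = 3"
      and R: "R \<in> NC - {P, Q}"
    obtain x1 y1 where 1: "P = {x1,y1}" "ncp x1 y1" using rep P by blast
    obtain x2 y2 where 2: "Q = {x2,y2}" "ncp x2 y2" using rep Q by blast
    obtain x3 y3 where 3: "R = {x3,y3}" "ncp x3 y3" using rep R by blast
    show "arc_count n b R \<le> 1"
    proof (rule ccontr)
      assume "\<not> arc_count n b R \<le> 1"
      then have "2 \<le> card (own {x3,y3})" using ac 3 by simp
      then show False using iii[OF 1(2) _ 2(2) _ 3(2)] c 1 2 3 R ac n7 by auto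
    qed
  qed
  show ?thesis using p1 p2 p3 p4 p5 by blast
qed

end
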